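(* For all real numbers $a,b,c>0$, \[ \frac{2a}{\sqrt{2a^2+b^2+c^2}}+\frac{2b}{\sqrt{2b^2+c^2+a^2}}+\frac{2c}{\sqrt{2c^2+a^2+b^2}}\leq \frac{3\sqrt{2}\,(a+b+c)}{\sqrt{5a^2+5b^2+5c^2+ab+bc+ca}}. \] *)

theory Defs
  imports Complex_Main
begin

end

theory Submission
  imports Defs
begin

lemma pqr_core:
  fixes p q r :: real
  assumes p: "p > 0" and q: "q \<ge> 0" and t: "p^2 - 3*q \<ge> 0" and r: "r \<ge> 0" and X: "3*p*r \<le> q^2"
  shows "0 \<le> 8*p^7-60*p^5*q+151*p^3*q^2-126*p*q^3+12*p^4*r-88*p^2*q*r+126*q^2*r+9*p*r^2"
proof -
  define t where "t = p^2 - 3*q"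
  define X where "X = q^2 - 3*p*r"
  define K where "K = -(3*(12*p^4-88*p^2*q+126*q^2) + 18*q^2)"
  have t0: "t \<ge> 0" using t t_def by simp
  have X0: "X \<ge> 0" "X \<le> q^2" using X r p X_def by auto
  have P0: "0 \<le> 72*t^4 + 324*q*t^3 + 423*q^2*t^2 + 168*q^3*t"
    using t0 q by (intro add_nonneg_nonneg mult_nonneg_nonneg) auto
  have Q0: "0 \<le> 72*t^4 + 324*q*t^3 + 387*q^2*t^2 + 216*q^3*t + 72*q^4"
    using t0 q by (intro add_nonneg_nonneg mult_nonneg_nonneg) auto
  have id: "9*p*(8*p^7-60*p^5*q+151*p^3*q^2-126*p*q^3+12*p^4*r-88*p^2*q*r+126*q^2*r+9*p*r^2)
      = (72*t^4 + 324*q*t^3 + 423*q^2*t^2 + 168*q^3*t) + X*K + 9*X^2"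
    unfolding t_def X_def K_def by algebra
  have id2: "(72*t^4 + 324*q*t^3 + 423*q^2*t^2 + 168*q^3*t) + q^2*K
      = 72*t^4 + 324*q*t^3 + 387*q^2*t^2 + 216*q^3*t + 72*q^4"
    unfolding t_def K_def by algebra
  have "0 \<le> (72*t^4 + 324*q*t^3 + 423*q^2*t^2 + 168*q^3*t) + X*K + 9*X^2"
  proof (cases "K \<ge> 0")
    case True then show ?thesis using P0 X0 by simp
  next
    case False
    have "q^2*K \<le> X*K" using X0 False by (intro mult_right_mono_neg) auto
    then show ?thesis using Q0 id2 by (smt (verit) zero_le_power2)
  qed
  then have "0 \<le> 9*p*(8*p^7-60*p^5*q+151*p^3*q^2-126*p*q^3+12*p^4*r-88*p^2*q*r+126*q^2*r+9*p*r^2)"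
    using id by simp
  then show ?thesis using p by (simp add: zero_le_mult_iff)
qed

lemma cs3:
  fixes x1 x2 x3 u1 u2 u3 :: real
  assumes "x1 > 0" "x2 > 0" "x3 > 0"
  shows "(u1+u2+u3)^2 \<le> (x1+x2+x3)*(u1^2/x1 + u2^2/x2 + u3^2/x3)"
proof -
  define v1 where "v1 = u1/x1"
  define v2 where "v2 = u2/x2"
  define v3 where "v3 = u3/x3"
  have u: "u1 = x1*v1" "u2 = x2*v2" "u3 = x3*v3" using assms by (auto simp: v1_def v2_def v3_def)
  have e: "u1^2/x1 = x1*v1^2" "u2^2/x2 = x2*v2^2" "u3^2/x3 = x3*v3^2"
    using assms by (auto simp: u power2_eq_square)
  have "(x1+x2+x3)*(x1*v1^2 + x2*v2^2 + x3*v3^2) - (x1*v1+x2*v2+x3*v3)^2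
     = x1*x2*(v1-v2)^2 + x1*x3*(v1-v3)^2 + x2*x3*(v2-v3)^2" by algebra
  moreover have "0 \<le> x1*x2*(v1-v2)^2 + x1*x3*(v1-v3)^2 + x2*x3*(v2-v3)^2"
    using assms by (intro add_nonneg_nonneg mult_nonneg_nonneg) auto
  ultimately have "(x1*v1+x2*v2+x3*v3)^2 \<le> (x1+x2+x3)*(x1*v1^2 + x2*v2^2 + x3*v3^2)" by linarith
  then show ?thesis unfolding e by (simp add: u)
qed

theorem mainTheorem4:
  fixes a b c :: real
  assumes "a > 0" and "b > 0" and "c > 0"
  shows "2*a / sqrt (2*a^2 + b^2 + c^2) + 2*b / sqrt (2*b^2 + c^2 + a^2)
           + 2*c / sqrt (2*c^2 + a^2 + b^2)
         \<le> 3 * sqrt 2 * (a + b + c) / sqrt (5*a^2 + 5*b^2 + 5*c^2 + a*b + b*c + c*a)"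
proof -
  define A where "A = 2*a^2 + b^2 + c^2"
  define B where "B = 2*b^2 + c^2 + a^2"
  define C where "C = 2*c^2 + a^2 + b^2"
  define M where "M = 5*a^2 + 5*b^2 + 5*c^2 + a*b + b*c + c*a"
  define p where "p = a+b+c"
  define q where "q = a*b+b*c+c*a"
  define r where "r = a*b*c"
  have pos: "A > 0" "B > 0" "C > 0" "M > 0" "p > 0"
    using assms by (auto simp: A_def B_def C_def M_def p_def intro!: add_pos_pos add_pos_nonneg)
  have q0: "q \<ge> 0" "r \<ge> 0" using assms by (auto simp: q_def r_def)
  have t0: "p^2 - 3*q \<ge> 0"
  proof -
    have "p^2 - 3*q = ((a-b)^2 + (b-c)^2 + (c-a)^2)/2" unfolding p_def q_def by algebra
    moreover have "0 \<le> ((a-b)^2 + (b-c)^2 + (c-a)^2)/2" by simp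
    ultimately show ?thesis by linarith
  qed
  have X0: "3*p*r \<le> q^2"
  proof -
    have "q^2 - 3*p*r = ((a*b-b*c)^2 + (b*c-c*a)^2 + (c*a-a*b)^2)/2" unfolding p_def q_def r_def by algebra
    then show ?thesis by (smt (verit) zero_le_power2 divide_nonneg_nonneg)
  qed
  have core: "0 \<le> 8*p^7-60*p^5*q+151*p^3*q^2-126*p*q^3+12*p^4*r-88*p^2*q*r+126*q^2*r+9*p*r^2"
    using pqr_core[OF pos(5) q0(1) t0 q0(2) X0] .
  have polyid: "9*p*(A*B*C) - 2*M*(a*B*C + b*A*C + c*A*B)
     = 8*p^7-60*p^5*q+151*p^3*q^2-126*p*q^3+12*p^4*r-88*p^2*q*r+126*q^2*r+9*p*r^2"
    unfolding A_def B_def C_def M_def p_def q_def r_def by algebra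
  have W: "4*a/A + 4*b/B + 4*c/C \<le> 18*p/M"
  proof -
    have "a/A + b/B + c/C = (a*B*C + b*A*C + c*A*B)/(A*B*C)"
      using pos by (simp add: field_simps)
    also have "\<dots> \<le> 9*p/(2*M)"
      using pos core polyid by (simp add: divide_simps mult.commute mult.left_commute)
    finally have "4*(a/A + b/B + c/C) \<le> 4*(9*p/(2*M))" by simp
    moreover have "4*a/A+4*b/B+4*c/C = 4*(a/A+b/B+c/C)" by (simp add: distrib_left)
    moreover have "4*(9*p/(2*M)) = 18*p/M" by simp
    ultimately show ?thesis by linarith
  qed
  define u1 where "u1 = 2*a / sqrt A"
  define u2 where "u2 = 2*b / sqrt B"
  define u3 where "u3 = 2*c / sqrt C"
  have ue: "u1^2/a = 4*a/A" "u2^2/b = 4*b/B" "u3^2/c = 4*c/C"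
    using pos assms by (auto simp: u1_def u2_def u3_def power_divide power_mult_distrib power2_eq_square)
  have "(u1+u2+u3)^2 \<le> p*(4*a/A + 4*b/B + 4*c/C)"
    using cs3[OF assms, of u1 u2 u3] ue p_def by simp
  also have "\<dots> \<le> p*(18*p/M)" using W pos by (intro mult_left_mono) auto
  also have "\<dots> = 18*p^2/M" by (simp add: power2_eq_square)
  finally have L: "u1+u2+u3 \<le> sqrt (18*p^2/M)" by (rule real_le_rsqrt)
  have "sqrt (18*p^2/M) = 3*sqrt 2*p/sqrt M"
  proof -
    have "sqrt (18*p^2/M) = sqrt 18 * p / sqrt M"
      using pos by (simp add: real_sqrt_divide real_sqrt_mult)
    moreover have "sqrt (18::real) = 3*sqrt 2"
    proof -
      have h9: "sqrt 9 = (3::real)" by (rule real_sqrt_unique) auto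
      have "sqrt (9*2::real) = sqrt 9 * sqrt 2" by (rule real_sqrt_mult)
      then show ?thesis using h9 by simp
    qed
    ultimately show ?thesis by simp
  qed
  then show ?thesis using L unfolding u1_def u2_def u3_def A_def B_def C_def M_def p_def by simp
qed

end
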